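(* Let $\tilde{A}\in\mathbb{Q}^{q\times n}$, $\tilde{b}\in\mathbb{Q}^q$ be the constraint data of the LP relaxation $P=\{x:\tilde{A}x\ge\tilde{b}\}=\{x:Ax\ge b,\ x\ge 0,\ x_j\le 1,\ j=1,\dots,p\}$ ($q=m+n+p$, $Q=\{1,\dots,q\}$), let $\bar{x}\in P$, and let $T$ be a finite index set with $D^t\in\mathbb{Q}^{r\times n}$, $d_0^t\in\mathbb{Q}^r$ for $t\in T$. Let $\bar{w}=(\bar{\alpha},\bar{\beta},\{\bar{u}^t,\bar{v}^t\}_{t\in T})$ be a basic optimal solution of the CGLP (minimize $\alpha\bar{x}-\beta$ over the CGLP system) such that the cut separates $\bar{x}$, i.e. $\bar{\alpha}\bar{x}<\bar{\beta}$. Let $(\check{\theta},\check{\delta},\{\check{u}^t,\check{v}^t\}_{t\in T})$ be an optimal solution of the RCV-MILP for the cut $\bar{\alpha}x\ge\bar{\beta}$. Then the cut $\bar{\alpha}x\ge\bar{\beta}$ is not strictly irregular if and only if $\check{\theta}>0$.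
   Context: The CGLP system consists of variables $\alpha\in\mathbb{R}^n$, $\beta\in\mathbb{R}$, $u^t\in\mathbb{R}^q$, $v^t\in\mathbb{R}^r$ ($t\in T$) and constraints: $\alpha-u^t\tilde{A}-v^tD^t=0$ and $\beta-u^t\tilde{b}-v^td_0^t=0$ for all $t\in T$; $\sum_{t\in T}\sum_{i=1}^q u^t_i+\sum_{t\in T}\sum_{i=1}^r v^t_i=1$; $u^t,v^t\ge 0$ for all $t\in T$. For a feasible solution with multipliers $u$, let $N(u)=\{j\in Q: u^t_j>0\text{ for some } t\in T\}$ and let $\tilde{A}_N$ denote the submatrix of $\tilde{A}$ with rows indexed by $N$. A feasible solution of the CGLP system (basic or not) is called extended regular if $\tilde{A}_{N(u)}$ has full row rank. A cut $\alpha x\ge\beta$ is strictly irregular if there is no extended regular feasible CGLP solution whose $(\alpha,\beta)$-component equals $(\alpha,\beta)$ up to a positive scalar multiple. The RCV-MILP for the cut $\bar{\alpha}x\ge\bar{\beta}$ has variables $\theta\in[0,1]$, $\delta_j\in\{0,1\}$ ($j\in Q$), $u^t\in\mathbb{R}^q$, $v^t\in\mathbb{R}^r$ ($t\in T$), and is: maximize $\theta$ subject to $\theta\bar{\alpha}-u^t\tilde{A}-v^tD^t=0$ and $\theta\bar{\beta}-u^t\tilde{b}-v^td_0^t=0$ for all $t\in T$; $\delta_j-u^t_j\ge 0$ for all $j\in Q$, $t\in T$; $\sum_{j\in Q}\delta_j\le n$; $\sum_{j\in N}\delta_j\le\operatorname{rank}(\tilde{A}_N)$ for every subset $N\subseteq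 Q$; $u^t,v^t\ge 0$ for all $t\in T$. *)

theory Defs
  imports "HOL-Analysis.Analysis"
begin

text \<open>Rows are indexed by the sum type 'm + ('n + 'n):
  Inl i            : row i of A       (A_i x \<ge> b_i),
  Inr (Inl j)      : x_j \<ge> 0,
  Inr (Inr j), j\<in>J : -x_j \<ge> -1.
  Hence q = m + n + p with p = card J.\<close>

type_synonym ('m, 'n) qidx = "'m + ('n + 'n)"

definition Qset :: "'n set \<Rightarrow> ('m, 'n) qidx set" where
  "Qset J = range Inl \<union> range (Inr \<circ> Inl) \<union> (Inr \<circ> Inr) ` J"

fun Atil :: "real^'n^'m \<Rightarrow> ('m, 'n) qidx \<Rightarrow> real^'n" where
  "Atil A (Inl i) = A $ i"
| "Atil A (Inr (Inl j)) = axis j 1"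
| "Atil A (Inr (Inr j)) = - axis j 1"

fun btil :: "real^'m \<Rightarrow> ('m, 'n) qidx \<Rightarrow> real" where
  "btil b (Inl i) = b $ i"
| "btil b (Inr (Inl j)) = 0"
| "btil b (Inr (Inr j)) = -1"

definition lp_relax :: "real^'n^'m \<Rightarrow> real^'m \<Rightarrow> 'n set \<Rightarrow> (real^'n) set" where
  "lp_relax A b J = {x. \<forall>i\<in>Qset J. Atil A i \<bullet> x \<ge> btil b i}"

definition rank_rows :: "('q \<Rightarrow> real^'n) \<Rightarrow> 'q set \<Rightarrow> nat" where
  "rank_rows M N = dim (M ` N)"

definition full_row_rank :: "('q \<Rightarrow> real^'n) \<Rightarrow> 'q set \<Rightarrow> bool" where
  "full_row_rank M N \<longleftrightarrow> rank_rows M N = card N"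

definition cglp_feasible ::
  "real^'n^'m \<Rightarrow> real^'m \<Rightarrow> 'n set \<Rightarrow> 't set \<Rightarrow> ('t \<Rightarrow> real^'n^'r) \<Rightarrow> ('t \<Rightarrow> real^'r)
   \<Rightarrow> real^'n \<Rightarrow> real \<Rightarrow> ('t \<Rightarrow> ('m,'n) qidx \<Rightarrow> real) \<Rightarrow> ('t \<Rightarrow> real^'r) \<Rightarrow> bool" where
  "cglp_feasible A b J T D d0 \<alpha> \<beta> u v \<longleftrightarrow>
     (\<forall>t\<in>T. \<alpha> - (\<Sum>i\<in>Qset J. u t i *\<^sub>R Atil A i) - (v t v* D t) = 0
           \<and> \<beta> - (\<Sum>i\<in>Qset J. u t i * btil b i) - (v t \<bullet> d0 t) = 0)
   \<and> (\<Sum>t\<in>T. \<Sum>i\<in>Qset J. u t i) + (\<Sum>t\<in>T. \<Sum>k\<in>UNIV. v t $ k) = 1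
   \<and> (\<forall>t\<in>T. (\<forall>i\<in>Qset J. u t i \<ge> 0) \<and> (\<forall>k. v t $ k \<ge> 0))
   \<and> (\<forall>t i. t \<notin> T \<or> i \<notin> Qset J \<longrightarrow> u t i = 0)
   \<and> (\<forall>t. t \<notin> T \<longrightarrow> v t = 0)"

text \<open>basic feasible solution = extreme point (vertex) of the CGLP polyhedron\<close>
definition cglp_basic ::
  "real^'n^'m \<Rightarrow> real^'m \<Rightarrow> 'n set \<Rightarrow> 't set \<Rightarrow> ('t \<Rightarrow> real^'n^'r) \<Rightarrow> ('t \<Rightarrow> real^'r)
   \<Rightarrow> real^'n \<Rightarrow> real \<Rightarrow> ('t \<Rightarrow> ('m,'n) qidx \<Rightarrow> real) \<Rightarrow> ('t \<Rightarrow> real^'r) \<Rightarrow> bool" where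
  "cglp_basic A b J T D d0 \<alpha> \<beta> u v \<longleftrightarrow>
     cglp_feasible A b J T D d0 \<alpha> \<beta> u v \<and>
     (\<forall>\<alpha>1 \<beta>1 u1 v1 \<alpha>2 \<beta>2 u2 v2.
        cglp_feasible A b J T D d0 \<alpha>1 \<beta>1 u1 v1 \<and> cglp_feasible A b J T D d0 \<alpha>2 \<beta>2 u2 v2 \<and>
        \<alpha> = (1/2) *\<^sub>R (\<alpha>1 + \<alpha>2) \<and> \<beta> = (\<beta>1 + \<beta>2) / 2 \<and>
        u = (\<lambda>t i. (u1 t i + u2 t i) / 2) \<and> v = (\<lambda>t. (1/2) *\<^sub>R (v1 t + v2 t))
        \<longrightarrow> \<alpha>1 = \<alpha>2 \<and> \<beta>1 = \<beta>2 \<and> u1 = u2 \<and> v1 = v2)"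

definition cglp_optimal ::
  "real^'n^'m \<Rightarrow> real^'m \<Rightarrow> 'n set \<Rightarrow> 't set \<Rightarrow> ('t \<Rightarrow> real^'n^'r) \<Rightarrow> ('t \<Rightarrow> real^'r) \<Rightarrow> real^'n
   \<Rightarrow> real^'n \<Rightarrow> real \<Rightarrow> ('t \<Rightarrow> ('m,'n) qidx \<Rightarrow> real) \<Rightarrow> ('t \<Rightarrow> real^'r) \<Rightarrow> bool" where
  "cglp_optimal A b J T D d0 xbar \<alpha> \<beta> u v \<longleftrightarrow>
     cglp_feasible A b J T D d0 \<alpha> \<beta> u v \<and>
     (\<forall>\<alpha>' \<beta>' u' v'. cglp_feasible A b J T D d0 \<alpha>' \<beta>' u' v' \<longrightarrow>
        \<alpha> \<bullet> xbar - \<beta> \<le> \<alpha>' \<bullet> xbar - \<beta>')"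

definition Nsupp :: "'n set \<Rightarrow> 't set \<Rightarrow> ('t \<Rightarrow> ('m,'n) qidx \<Rightarrow> real) \<Rightarrow> ('m,'n) qidx set" where
  "Nsupp J T u = {j \<in> Qset J. \<exists>t\<in>T. u t j > 0}"

definition extended_regular ::
  "real^'n^'m \<Rightarrow> real^'m \<Rightarrow> 'n set \<Rightarrow> 't set \<Rightarrow> ('t \<Rightarrow> real^'n^'r) \<Rightarrow> ('t \<Rightarrow> real^'r)
   \<Rightarrow> real^'n \<Rightarrow> real \<Rightarrow> ('t \<Rightarrow> ('m,'n) qidx \<Rightarrow> real) \<Rightarrow> ('t \<Rightarrow> real^'r) \<Rightarrow> bool" where
  "extended_regular A b J T D d0 \<alpha> \<beta> u v \<longleftrightarrow>
     cglp_feasible A b J T D d0 \<alpha> \<beta> u v \<and> full_row_rank (Atil A) (Nsupp J T u)"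

definition strictly_irregular ::
  "real^'n^'m \<Rightarrow> real^'m \<Rightarrow> 'n set \<Rightarrow> 't set \<Rightarrow> ('t \<Rightarrow> real^'n^'r) \<Rightarrow> ('t \<Rightarrow> real^'r)
   \<Rightarrow> real^'n \<Rightarrow> real \<Rightarrow> bool" where
  "strictly_irregular A b J T D d0 \<alpha>c \<beta>c \<longleftrightarrow>
     \<not> (\<exists>\<alpha> \<beta> u v s. s > 0 \<and> extended_regular A b J T D d0 \<alpha> \<beta> u v \<and>
          \<alpha> = s *\<^sub>R \<alpha>c \<and> \<beta> = s * \<beta>c)"

definition rcv_feasible ::
  "real^'n^'m \<Rightarrow> real^'m \<Rightarrow> 'n set \<Rightarrow> 't set \<Rightarrow> ('t \<Rightarrow> real^'n^'r) \<Rightarrow> ('t \<Rightarrow> real^'r)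
   \<Rightarrow> real^'n \<Rightarrow> real \<Rightarrow> real \<Rightarrow> (('m,'n) qidx \<Rightarrow> real)
   \<Rightarrow> ('t \<Rightarrow> ('m,'n) qidx \<Rightarrow> real) \<Rightarrow> ('t \<Rightarrow> real^'r) \<Rightarrow> bool" where
  "rcv_feasible A b J T D d0 \<alpha>c \<beta>c \<theta> \<delta> u v \<longleftrightarrow>
     0 \<le> \<theta> \<and> \<theta> \<le> 1
   \<and> (\<forall>j\<in>Qset J. \<delta> j \<in> {0, 1}) \<and> (\<forall>j. j \<notin> Qset J \<longrightarrow> \<delta> j = 0)
   \<and> (\<forall>t\<in>T. \<theta> *\<^sub>R \<alpha>c - (\<Sum>i\<in>Qset J. u t i *\<^sub>R Atil A i) - (v t v* D t) = 0
           \<and> \<theta> * \<beta>c - (\<Sum>i\<in>Qset J. u t i * btil b i) - (v t \<bullet> d0 t) = 0)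
   \<and> (\<forall>j\<in>Qset J. \<forall>t\<in>T. \<delta> j - u t j \<ge> 0)
   \<and> (\<Sum>j\<in>Qset J. \<delta> j) \<le> real CARD('n)
   \<and> (\<forall>N. N \<subseteq> Qset J \<longrightarrow> (\<Sum>j\<in>N. \<delta> j) \<le> real (rank_rows (Atil A) N))
   \<and> (\<forall>t\<in>T. (\<forall>i\<in>Qset J. u t i \<ge> 0) \<and> (\<forall>k. v t $ k \<ge> 0))
   \<and> (\<forall>t i. t \<notin> T \<or> i \<notin> Qset J \<longrightarrow> u t i = 0)
   \<and> (\<forall>t. t \<notin> T \<longrightarrow> v t = 0)"

definition rcv_optimal ::
  "real^'n^'m \<Rightarrow> real^'m \<Rightarrow> 'n set \<Rightarrow> 't set \<Rightarrow> ('t \<Rightarrow> real^'n^'r) \<Rightarrow> ('t \<Rightarrow> real^'r)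
   \<Rightarrow> real^'n \<Rightarrow> real \<Rightarrow> real \<Rightarrow> (('m,'n) qidx \<Rightarrow> real)
   \<Rightarrow> ('t \<Rightarrow> ('m,'n) qidx \<Rightarrow> real) \<Rightarrow> ('t \<Rightarrow> real^'r) \<Rightarrow> bool" where
  "rcv_optimal A b J T D d0 \<alpha>c \<beta>c \<theta> \<delta> u v \<longleftrightarrow>
     rcv_feasible A b J T D d0 \<alpha>c \<beta>c \<theta> \<delta> u v \<and>
     (\<forall>\<theta>' \<delta>' u' v'. rcv_feasible A b J T D d0 \<alpha>c \<beta>c \<theta>' \<delta>' u' v' \<longrightarrow> \<theta>' \<le> \<theta>)"

end

theory Submission
  imports Defs
begin

lemma frr_mono:
  fixes f :: "'q \<Rightarrow> real^'n::finite"
  assumes "finite S" "dim (f ` S) = card S" "N \<subseteq> S"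
  shows "dim (f ` N) = card N"
proof -
  have c1: "card (f ` S) \<le> card S" using assms(1) by (rule card_image_le)
  have c2: "dim (f ` S) \<le> card (f ` S)" using assms(1) by (simp add: dim_le_card')
  have eq: "card (f ` S) = card S" using c1 c2 assms(2) by linarith
  have inj: "inj_on f S" using eq assms(1) by (simp add: eq_card_imp_inj_on)
  have ind: "independent (f ` S)"
    using card_eq_dim[of "f ` S" "f ` S"] eq assms by (simp add: span_superset)
  have "independent (f ` N)" using ind assms(3) by (meson image_mono independent_mono)
  then have "dim (f ` N) = card (f ` N)" by (rule dim_eq_card_independent)
  also have "\<dots> = card N" using inj assms(3) by (meson card_image inj_on_subset)
  finally show ?thesis .
qed

lemma finite_Qset: "finite (Qset (J :: 'n::finite set) :: ('m::finite,'n) qidx set)"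
  by simp

theorem theorem4:
  fixes A :: "real^'n::finite^'m::finite" and b :: "real^'m" and J :: "'n set"
    and T :: "'t set" and D :: "'t \<Rightarrow> real^'n^'r::finite" and d0 :: "'t \<Rightarrow> real^'r"
    and xbar :: "real^'n"
    and \<alpha>b :: "real^'n" and \<beta>b :: real
    and ub :: "'t \<Rightarrow> ('m,'n) qidx \<Rightarrow> real" and vb :: "'t \<Rightarrow> real^'r"
    and \<theta>c :: real and \<delta>c :: "('m,'n) qidx \<Rightarrow> real"
    and uc :: "'t \<Rightarrow> ('m,'n) qidx \<Rightarrow> real" and vc :: "'t \<Rightarrow> real^'r"
  assumes "\<forall>i j. A $ i $ j \<in> \<rat>" and "\<forall>i. b $ i \<in> \<rat>"
    and "\<forall>t\<in>T. \<forall>k j. D t $ k $ j \<in> \<rat>" and "\<forall>t\<in>T. \<forall>k. d0 t $ k \<in> \<rat>"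
    and "finite T"
    and "xbar \<in> lp_relax A b J"
    and "cglp_basic A b J T D d0 \<alpha>b \<beta>b ub vb"
    and "cglp_optimal A b J T D d0 xbar \<alpha>b \<beta>b ub vb"
    and "\<alpha>b \<bullet> xbar < \<beta>b"
    and "rcv_optimal A b J T D d0 \<alpha>b \<beta>b \<theta>c \<delta>c uc vc"
  shows "\<not> strictly_irregular A b J T D d0 \<alpha>b \<beta>b \<longleftrightarrow> \<theta>c > 0"
proof
  define Q where "Q = (Qset J :: ('m,'n) qidx set)"
  have fQ: "finite Q" unfolding Q_def by simp
  assume "\<not> strictly_irregular A b J T D d0 \<alpha>b \<beta>b"
  then obtain \<alpha> \<beta> u v s where s: "s > 0" and er: "extended_regular A b J T D d0 \<alpha> \<beta> u v"
    and al: "\<alpha> = s *\<^sub>R \<alpha>b" and be: "\<beta> = s * \<beta>b"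
    unfolding strictly_irregular_def by blast
  have fe: "cglp_feasible A b J T D d0 \<alpha> \<beta> u v" using er unfolding extended_regular_def by blast
  define N where "N = Nsupp J T u"
  have NQ: "N \<subseteq> Q" unfolding N_def Nsupp_def Q_def by auto
  have fN: "finite N" using NQ fQ finite_subset by blast
  have frr: "dim (Atil A ` N) = card N"
    using er unfolding extended_regular_def full_row_rank_def rank_rows_def N_def by blast
  define c where "c = 1 / (s + 1)"
  have c0: "c > 0" "c \<le> 1" "c * s \<le> 1" using s unfolding c_def by (auto simp: field_simps)
  define \<delta> where "\<delta> = (\<lambda>j. if j \<in> N then (1::real) else 0)"
  have eqs: "\<forall>t\<in>T. \<alpha> - (\<Sum>i\<in>Q. u t i *\<^sub>R Atil A i) - (v t v* D t) = 0
           \<and> \<beta> - (\<Sum>i\<in>Q. u t i * btil b i) - (v t \<bullet> d0 t) = 0"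
    and tot: "(\<Sum>t\<in>T. \<Sum>i\<in>Q. u t i) + (\<Sum>t\<in>T. \<Sum>k\<in>UNIV. v t $ k) = 1"
    and nn: "\<forall>t\<in>T. (\<forall>i\<in>Q. u t i \<ge> 0) \<and> (\<forall>k. v t $ k \<ge> 0)"
    and z1: "\<forall>t i. t \<notin> T \<or> i \<notin> Q \<longrightarrow> u t i = 0"
    and z2: "\<forall>t. t \<notin> T \<longrightarrow> v t = 0"
    using fe unfolding cglp_feasible_def Q_def by auto
  have ule: "u t j \<le> 1" if "t \<in> T" "j \<in> Q" for t j
  proof -
    have "u t j \<le> (\<Sum>i\<in>Q. u t i)" using nn that fQ by (intro member_le_sum) auto
    also have "\<dots> \<le> (\<Sum>t\<in>T. \<Sum>i\<in>Q. u t i)"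
      using nn that assms(5) by (intro member_le_sum[of t T "\<lambda>t. \<Sum>i\<in>Q. u t i"]) (auto intro: sum_nonneg)
    also have "\<dots> \<le> 1" using tot nn by (smt (verit) sum_nonneg)
    finally show ?thesis .
  qed
  have sumN: "(\<Sum>j\<in>M. \<delta> j) = real (card (M \<inter> N))" if "M \<subseteq> Q" for M
  proof -
    have "finite M" using that fQ finite_subset by blast
    then show ?thesis unfolding \<delta>_def by (simp add: sum.If_cases)
  qed
  have feas: "rcv_feasible A b J T D d0 \<alpha>b \<beta>b (c * s) \<delta> (\<lambda>t i. c * u t i) (\<lambda>t. c *\<^sub>R v t)"
    unfolding rcv_feasible_def
  proof (intro conjI)
    show "0 \<le> c * s" using c0 s by simp
    show "c * s \<le> 1" by (rule c0)
    show "\<forall>j\<in>(Qset J :: ('m,'n) qidx set). \<delta> j \<in> {0, 1}" unfolding \<delta>_def by auto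
    show "\<forall>j. j \<notin> (Qset J :: ('m,'n) qidx set) \<longrightarrow> \<delta> j = 0" using NQ unfolding \<delta>_def Q_def by auto
    show "\<forall>t\<in>T. (c * s) *\<^sub>R \<alpha>b - (\<Sum>i\<in>(Qset J :: ('m,'n) qidx set). (c * u t i) *\<^sub>R Atil A i) - (c *\<^sub>R v t v* D t) = 0
           \<and> (c * s) * \<beta>b - (\<Sum>i\<in>(Qset J :: ('m,'n) qidx set). (c * u t i) * btil b i) - ((c *\<^sub>R v t) \<bullet> d0 t) = 0"
    proof
      fix t assume t: "t \<in> T"
      have e1: "\<alpha> - (\<Sum>i\<in>Q. u t i *\<^sub>R Atil A i) - (v t v* D t) = 0"
        and e2: "\<beta> - (\<Sum>i\<in>Q. u t i * btil b i) - (v t \<bullet> d0 t) = 0" using eqs t by auto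
      have "(c * s) *\<^sub>R \<alpha>b - (\<Sum>i\<in>Q. (c * u t i) *\<^sub>R Atil A i) - (c *\<^sub>R v t v* D t)
            = c *\<^sub>R (\<alpha> - (\<Sum>i\<in>Q. u t i *\<^sub>R Atil A i) - (v t v* D t))"
        by (simp add: al scaleR_vector_matrix_assoc scaleR_sum_right algebra_simps)
      moreover have "(c * s) * \<beta>b - (\<Sum>i\<in>Q. (c * u t i) * btil b i) - ((c *\<^sub>R v t) \<bullet> d0 t)
            = c * (\<beta> - (\<Sum>i\<in>Q. u t i * btil b i) - (v t \<bullet> d0 t))"
        by (simp add: be sum_distrib_left algebra_simps)
      ultimately show "(c * s) *\<^sub>R \<alpha>b - (\<Sum>i\<in>(Qset J :: ('m,'n) qidx set). (c * u t i) *\<^sub>R Atil A i) - (c *\<^sub>R v t v* D t) = 0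
           \<and> (c * s) * \<beta>b - (\<Sum>i\<in>(Qset J :: ('m,'n) qidx set). (c * u t i) * btil b i) - ((c *\<^sub>R v t) \<bullet> d0 t) = 0"
        using e1 e2 unfolding Q_def by simp
    qed
    show "\<forall>j\<in>(Qset J :: ('m,'n) qidx set). \<forall>t\<in>T. \<delta> j - c * u t j \<ge> 0"
    proof (intro ballI)
      fix j t assume j: "j \<in> (Qset J :: ('m,'n) qidx set)" and t: "t \<in> T"
      show "\<delta> j - c * u t j \<ge> 0"
      proof (cases "j \<in> N")
        case True
        have "c * u t j \<le> 1 * 1" using ule[of t j] t j c0 nn unfolding Q_def
          by (intro mult_mono) auto
        then show ?thesis using True unfolding \<delta>_def by simp
      next
        case False
        then have "u t j \<le> 0" using j t unfolding N_def Nsupp_def by auto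
        then show ?thesis using False c0 unfolding \<delta>_def by (simp add: mult_nonneg_nonpos)
      qed
    qed
    show "(\<Sum>j\<in>(Qset J :: ('m,'n) qidx set). \<delta> j) \<le> real CARD('n)"
    proof -
      have "(\<Sum>j\<in>(Qset J :: ('m,'n) qidx set). \<delta> j) = real (card N)" using sumN[of Q] NQ unfolding Q_def
        by (simp add: Int_absorb1)
      also have "card N \<le> CARD('n)" using frr dim_subset_UNIV_cart[of "Atil A ` N"] by simp
      finally show ?thesis by simp
    qed
    show "\<forall>M. M \<subseteq> (Qset J :: ('m,'n) qidx set) \<longrightarrow> (\<Sum>j\<in>M. \<delta> j) \<le> real (rank_rows (Atil A) M)"
    proof (intro allI impI)
      fix M assume M: "M \<subseteq> (Qset J :: ('m,'n) qidx set)"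
      have "(\<Sum>j\<in>M. \<delta> j) = real (card (M \<inter> N))" using sumN M unfolding Q_def by simp
      also have "card (M \<inter> N) = dim (Atil A ` (M \<inter> N))"
        using frr_mono[OF fN frr, of "M \<inter> N"] by simp
      also have "\<dots> \<le> dim (Atil A ` M)" by (intro dim_subset image_mono) auto
      finally show "(\<Sum>j\<in>M. \<delta> j) \<le> real (rank_rows (Atil A) M)"
        unfolding rank_rows_def by simp
    qed
    show "\<forall>t\<in>T. (\<forall>i\<in>(Qset J :: ('m,'n) qidx set). c * u t i \<ge> 0) \<and> (\<forall>k. (c *\<^sub>R v t) $ k \<ge> 0)"
      using nn c0 unfolding Q_def by auto
    show "\<forall>t i. t \<notin> T \<or> i \<notin> (Qset J :: ('m,'n) qidx set) \<longrightarrow> c * u t i = 0" using z1 unfolding Q_def by auto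
    show "\<forall>t. t \<notin> T \<longrightarrow> c *\<^sub>R v t = 0" using z2 by auto
  qed
  have "c * s \<le> \<theta>c" using assms(10) feas unfolding rcv_optimal_def by blast
  moreover have "c * s > 0" using c0 s by simp
  ultimately show "\<theta>c > 0" by linarith
next
  define Q where "Q = (Qset J :: ('m,'n) qidx set)"
  have fQ: "finite Q" unfolding Q_def by simp
  assume th: "\<theta>c > 0"
  have rf: "rcv_feasible A b J T D d0 \<alpha>b \<beta>b \<theta>c \<delta>c uc vc" using assms(10) unfolding rcv_optimal_def by blast
  have dl: "\<forall>j\<in>Q. \<delta>c j \<in> {0, 1}"
    and eqs: "\<forall>t\<in>T. \<theta>c *\<^sub>R \<alpha>b - (\<Sum>i\<in>Q. uc t i *\<^sub>R Atil A i) - (vc t v* D t) = 0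
           \<and> \<theta>c * \<beta>b - (\<Sum>i\<in>Q. uc t i * btil b i) - (vc t \<bullet> d0 t) = 0"
    and du: "\<forall>j\<in>Q. \<forall>t\<in>T. \<delta>c j - uc t j \<ge> 0"
    and rk: "\<forall>N. N \<subseteq> Q \<longrightarrow> (\<Sum>j\<in>N. \<delta>c j) \<le> real (rank_rows (Atil A) N)"
    and nn: "\<forall>t\<in>T. (\<forall>i\<in>Q. uc t i \<ge> 0) \<and> (\<forall>k. vc t $ k \<ge> 0)"
    and z1: "\<forall>t i. t \<notin> T \<or> i \<notin> Q \<longrightarrow> uc t i = 0"
    and z2: "\<forall>t. t \<notin> T \<longrightarrow> vc t = 0"
    using rf unfolding rcv_feasible_def Q_def by auto
  have "cglp_feasible A b J T D d0 \<alpha>b \<beta>b ub vb" using assms(7) unfolding cglp_basic_def by blast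
  then have "(\<Sum>t\<in>T. \<Sum>i\<in>(Qset J :: ('m,'n) qidx set). ub t i) + (\<Sum>t\<in>T. \<Sum>k\<in>UNIV. vb t $ k) = 1"
    unfolding cglp_feasible_def by blast
  then have Tne: "T \<noteq> {}" by auto
  define \<sigma> where "\<sigma> = (\<Sum>t\<in>T. \<Sum>i\<in>Q. uc t i) + (\<Sum>t\<in>T. \<Sum>k\<in>UNIV. vc t $ k)"
  have nnu: "\<forall>t\<in>T. (\<Sum>i\<in>Q. uc t i) \<ge> 0" using nn by (simp add: sum_nonneg)
  have nnv: "\<forall>t\<in>T. (\<Sum>k\<in>UNIV. vc t $ k) \<ge> 0" using nn by (simp add: sum_nonneg)
  have s1: "(\<Sum>t\<in>T. \<Sum>i\<in>Q. uc t i) \<ge> 0" using nnu by (simp add: sum_nonneg)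
  have s2: "(\<Sum>t\<in>T. \<Sum>k\<in>UNIV. vc t $ k) \<ge> 0" using nnv by (simp add: sum_nonneg)
  have \<sigma>pos: "\<sigma> > 0"
  proof (rule ccontr)
    assume "\<not> \<sigma> > 0"
    then have a1: "(\<Sum>t\<in>T. \<Sum>i\<in>Q. uc t i) = 0" and a2: "(\<Sum>t\<in>T. \<Sum>k\<in>UNIV. vc t $ k) = 0"
      using s1 s2 unfolding \<sigma>_def by linarith+
    obtain t where t: "t \<in> T" using Tne by blast
    have b1: "\<forall>t\<in>T. (\<Sum>i\<in>Q. uc t i) = 0"
      using a1 sum_nonneg_eq_0_iff[OF assms(5), of "\<lambda>t. \<Sum>i\<in>Q. uc t i"] nnu by blast
    have b2: "\<forall>t\<in>T. (\<Sum>k\<in>UNIV. vc t $ k) = 0"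
      using a2 sum_nonneg_eq_0_iff[OF assms(5), of "\<lambda>t. \<Sum>k\<in>UNIV. vc t $ k"] nnv by blast
    have u0: "\<forall>i\<in>Q. uc t i = 0"
      using b1 t sum_nonneg_eq_0_iff[OF fQ, of "uc t"] nn by blast
    have "\<forall>k\<in>UNIV. vc t $ k = 0"
      using b2 t nn by (simp add: sum_nonneg_eq_0_iff)
    then have "\<forall>k. vc t $ k = 0" by simp
    then have v0: "vc t = 0" by (simp add: vec_eq_iff)
    have "\<theta>c *\<^sub>R \<alpha>b = 0" "\<theta>c * \<beta>b = 0" using eqs t u0 v0 by auto
    then have "\<alpha>b = 0" "\<beta>b = 0" using th by auto
    then show False using assms(9) by simp
  qed
  define N where "N = {j \<in> Q. \<exists>t\<in>T. uc t j > 0}"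
  have NQ: "N \<subseteq> Q" unfolding N_def by auto
  have fN: "finite N" using NQ fQ finite_subset by blast
  have d1: "\<delta>c j = 1" if jN: "j \<in> N" for j
  proof -
    obtain t where "t \<in> T" "uc t j > 0" "j \<in> Q" using jN unfolding N_def by auto
    then show ?thesis using du dl by fastforce
  qed
  have frr: "dim (Atil A ` N) = card N"
  proof -
    have "real (card N) = (\<Sum>j\<in>N. \<delta>c j)" using d1 by simp
    also have "\<dots> \<le> real (dim (Atil A ` N))" using rk NQ unfolding rank_rows_def by blast
    finally have "card N \<le> dim (Atil A ` N)" by simp
    moreover have "dim (Atil A ` N) \<le> card (Atil A ` N)" using fN by (simp add: dim_le_card')
    moreover have "card (Atil A ` N) \<le> card N" using fN by (rule card_image_le)
    ultimately show ?thesis by linarith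
  qed
  define u where "u = (\<lambda>t i. uc t i / \<sigma>)"
  define v where "v = (\<lambda>t. (1/\<sigma>) *\<^sub>R vc t)"
  have Neq: "Nsupp J T u = N"
    unfolding Nsupp_def N_def u_def Q_def using \<sigma>pos by (auto simp: divide_pos_pos zero_less_divide_iff)
  have fe: "cglp_feasible A b J T D d0 ((\<theta>c/\<sigma>) *\<^sub>R \<alpha>b) ((\<theta>c/\<sigma>) * \<beta>b) u v"
    unfolding cglp_feasible_def
  proof (intro conjI)
    show "\<forall>t\<in>T. (\<theta>c/\<sigma>) *\<^sub>R \<alpha>b - (\<Sum>i\<in>(Qset J :: ('m,'n) qidx set). u t i *\<^sub>R Atil A i) - (v t v* D t) = 0
           \<and> (\<theta>c/\<sigma>) * \<beta>b - (\<Sum>i\<in>(Qset J :: ('m,'n) qidx set). u t i * btil b i) - (v t \<bullet> d0 t) = 0"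
    proof
      fix t assume t: "t \<in> T"
      have e1: "\<theta>c *\<^sub>R \<alpha>b - (\<Sum>i\<in>Q. uc t i *\<^sub>R Atil A i) - (vc t v* D t) = 0"
        and e2: "\<theta>c * \<beta>b - (\<Sum>i\<in>Q. uc t i * btil b i) - (vc t \<bullet> d0 t) = 0" using eqs t by auto
      have "(\<theta>c/\<sigma>) *\<^sub>R \<alpha>b - (\<Sum>i\<in>Q. u t i *\<^sub>R Atil A i) - (v t v* D t)
            = (1/\<sigma>) *\<^sub>R (\<theta>c *\<^sub>R \<alpha>b - (\<Sum>i\<in>Q. uc t i *\<^sub>R Atil A i) - (vc t v* D t))"
        by (simp add: u_def v_def scaleR_vector_matrix_assoc scaleR_sum_right algebra_simps)
      moreover have "(\<theta>c/\<sigma>) * \<beta>b - (\<Sum>i\<in>Q. u t i * btil b i) - (v t \<bullet> d0 t)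
            = (1/\<sigma>) * (\<theta>c * \<beta>b - (\<Sum>i\<in>Q. uc t i * btil b i) - (vc t \<bullet> d0 t))"
        by (simp add: u_def v_def sum_distrib_left sum_divide_distrib algebra_simps)
      ultimately show "(\<theta>c/\<sigma>) *\<^sub>R \<alpha>b - (\<Sum>i\<in>(Qset J :: ('m,'n) qidx set). u t i *\<^sub>R Atil A i) - (v t v* D t) = 0
           \<and> (\<theta>c/\<sigma>) * \<beta>b - (\<Sum>i\<in>(Qset J :: ('m,'n) qidx set). u t i * btil b i) - (v t \<bullet> d0 t) = 0"
        using e1 e2 unfolding Q_def by simp
    qed
    show "(\<Sum>t\<in>T. \<Sum>i\<in>(Qset J :: ('m,'n) qidx set). u t i) + (\<Sum>t\<in>T. \<Sum>k\<in>UNIV. v t $ k) = 1"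
    proof -
      have h1: "(\<Sum>t\<in>T. \<Sum>i\<in>Q. u t i) = (\<Sum>t\<in>T. \<Sum>i\<in>Q. uc t i) / \<sigma>"
        unfolding u_def by (simp add: sum_divide_distrib)
      have h2: "(\<Sum>t\<in>T. \<Sum>k\<in>UNIV. v t $ k) = (\<Sum>t\<in>T. \<Sum>k\<in>UNIV. vc t $ k) / \<sigma>"
        unfolding v_def by (simp add: sum_divide_distrib)
      have "(\<Sum>t\<in>T. \<Sum>i\<in>(Qset J :: ('m,'n) qidx set). u t i) + (\<Sum>t\<in>T. \<Sum>k\<in>UNIV. v t $ k) = \<sigma> / \<sigma>"
        unfolding Q_def[symmetric] h1 h2 add_divide_distrib[symmetric] \<sigma>_def[symmetric] by (rule refl)
      then show ?thesis using \<sigma>pos by simp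
    qed
    show "\<forall>t\<in>T. (\<forall>i\<in>(Qset J :: ('m,'n) qidx set). u t i \<ge> 0) \<and> (\<forall>k. v t $ k \<ge> 0)"
      using nn \<sigma>pos unfolding u_def v_def Q_def by auto
    show "\<forall>t i. t \<notin> T \<or> i \<notin> (Qset J :: ('m,'n) qidx set) \<longrightarrow> u t i = 0" using z1 unfolding u_def Q_def by auto
    show "\<forall>t. t \<notin> T \<longrightarrow> v t = 0" using z2 unfolding v_def by auto
  qed
  have "extended_regular A b J T D d0 ((\<theta>c/\<sigma>) *\<^sub>R \<alpha>b) ((\<theta>c/\<sigma>) * \<beta>b) u v"
    unfolding extended_regular_def full_row_rank_def rank_rows_def using fe Neq frr by simp
  moreover have "\<theta>c/\<sigma> > 0" using th \<sigma>pos by simp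
  ultimately show "\<not> strictly_irregular A b J T D d0 \<alpha>b \<beta>b"
    unfolding strictly_irregular_def by blast
qed

end
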